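(* Let $\mathscr{X}$ be a complex Banach space, $\mathcal{A}\subseteq\mathcal{B}(\mathscr{X})$ a reflexive algebra, and $S\in\mathcal{B}(\mathscr{X})$ invertible. The following are equivalent: (a) $S\in\mathrm{Col}(\mathcal{A})$; (b) $S\mathcal{A}_x\in\mathrm{Lat}(\mathcal{A})$ and $S^{-1}\mathcal{A}_x\in\mathrm{Lat}(\mathcal{A})$ for all $x\in\mathscr{X}$; (c) $S\mathcal{A}S^{-1}=\mathcal{A}$; (d) $\mathrm{Lat}(S\mathcal{A}S^{-1})=\mathrm{Lat}(\mathcal{A})$; (e) $S\mathcal{A}_x=\mathcal{A}_{Sx}$ for all $x\in\mathscr{X}$.
   Context: $\mathrm{Lat}(\mathcal{T})$ is the set of closed subspaces invariant under all operators in $\mathcal{T}\subseteq\mathcal{B}(\mathscr{X})$; $\mathrm{Alg}(\mathfrak{F})=\{T\in\mathcal{B}(\mathscr{X}):T\mathscr{M}\subseteq\mathscr{M}\ \forall\mathscr{M}\in\mathfrak{F}\}$. A reflexive algebra is a subalgebra $\mathcal{A}\subseteq\mathcal{B}(\mathscr{X})$ with $\mathrm{Alg}\,\mathrm{Lat}(\mathcal{A})=\mathcal{A}$. For $x\in\mathscr{X}$, $\mathcal{A}_x=\overline{\{Ax:A\in\mathcal{A}\}}$. An invertible $S$ is a collineation of a family $\mathfrak{F}$ of closed subspaces if for all closed subspaces $\mathscr{M}$: $\mathscr{M}\in\mathfrak{F}$ iff $S\mathscr{M}\in\mathfrak{F}$; $\mathrm{Col}(\mathcal{A}):=\mathrm{Col}(\mathrm{Lat}(\mathcal{A}))$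 is the group of collineations of $\mathrm{Lat}(\mathcal{A})$. *)

theory Defs
  imports "HOL-Analysis.Analysis"
begin

text \<open>A complex Banach space is encoded as a real Banach space 'a::banach together
with a complex structure J (multiplication by the imaginary unit).\<close>

definition cscale :: "('a::real_vector \<Rightarrow> 'a) \<Rightarrow> complex \<Rightarrow> 'a \<Rightarrow> 'a" where
  "cscale J c x = Re c *\<^sub>R x + Im c *\<^sub>R J x"

definition complex_structure :: "('a::real_normed_vector \<Rightarrow> 'a) \<Rightarrow> bool" where
  "complex_structure J \<longleftrightarrow> bounded_linear J \<and> (\<forall>x. J (J x) = - x)
     \<and> (\<forall>c x. norm (cscale J c x) = cmod c * norm x)"

definition Bops :: "('a::real_normed_vector \<Rightarrow> 'a) \<Rightarrow> ('a \<Rightarrow> 'a) set" where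
  "Bops J = {T. bounded_linear T \<and> (\<forall>x. T (J x) = J (T x))}"

definition invertible_op :: "('a::real_normed_vector \<Rightarrow> 'a) \<Rightarrow> ('a \<Rightarrow> 'a) \<Rightarrow> bool" where
  "invertible_op J S \<longleftrightarrow> S \<in> Bops J \<and> (\<exists>S'\<in>Bops J. S \<circ> S' = id \<and> S' \<circ> S = id)"

definition closed_csubspace :: "('a::real_normed_vector \<Rightarrow> 'a) \<Rightarrow> 'a set \<Rightarrow> bool" where
  "closed_csubspace J M \<longleftrightarrow> closed M \<and> subspace M \<and> J ` M \<subseteq> M"

definition Lat :: "('a::real_normed_vector \<Rightarrow> 'a) \<Rightarrow> ('a \<Rightarrow> 'a) set \<Rightarrow> 'a set set" where
  "Lat J \<T> = {M. closed_csubspace J M \<and> (\<forall>T\<in>\<T>. T ` M \<subseteq> M)}"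

definition Alg :: "('a::real_normed_vector \<Rightarrow> 'a) \<Rightarrow> 'a set set \<Rightarrow> ('a \<Rightarrow> 'a) set" where
  "Alg J F = {T \<in> Bops J. \<forall>M\<in>F. T ` M \<subseteq> M}"

definition subalgebra :: "('a::real_normed_vector \<Rightarrow> 'a) \<Rightarrow> ('a \<Rightarrow> 'a) set \<Rightarrow> bool" where
  "subalgebra J \<A> \<longleftrightarrow> \<A> \<subseteq> Bops J \<and> (\<lambda>x. 0) \<in> \<A>
     \<and> (\<forall>A\<in>\<A>. \<forall>B\<in>\<A>. (\<lambda>x. A x + B x) \<in> \<A> \<and> A \<circ> B \<in> \<A>)
     \<and> (\<forall>c. \<forall>A\<in>\<A>. (\<lambda>x. cscale J c (A x)) \<in> \<A>)"

definition reflexive_algebra :: "('a::real_normed_vector \<Rightarrow> 'a) \<Rightarrow> ('a \<Rightarrow> 'a) set \<Rightarrow> bool" where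
  "reflexive_algebra J \<A> \<longleftrightarrow> subalgebra J \<A> \<and> Alg J (Lat J \<A>) = \<A>"

definition orbit_sp :: "('a::real_normed_vector \<Rightarrow> 'a) set \<Rightarrow> 'a \<Rightarrow> 'a set" where
  "orbit_sp \<A> x = closure {A x | A. A \<in> \<A>}"

definition collineation :: "('a::real_normed_vector \<Rightarrow> 'a) \<Rightarrow> 'a set set \<Rightarrow> ('a \<Rightarrow> 'a) \<Rightarrow> bool" where
  "collineation J F S \<longleftrightarrow> invertible_op J S \<and>
     (\<forall>M. closed_csubspace J M \<longrightarrow> (M \<in> F \<longleftrightarrow> S ` M \<in> F))"

definition Col :: "('a::real_normed_vector \<Rightarrow> 'a) \<Rightarrow> ('a \<Rightarrow> 'a) set \<Rightarrow> ('a \<Rightarrow> 'a) set" where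
  "Col J \<A> = {S. collineation J (Lat J \<A>) S}"

end

theory Submission
  imports Defs
begin

lemma subspace_closure_gen:
  fixes S :: "'a::real_normed_vector set"
  assumes "subspace S" shows "subspace (closure S)"
proof -
  have "0 \<in> S" using assms by (rule subspace_0)
  then have "0 \<in> closure S" using closure_subset by blast
  moreover have "x + y \<in> closure S" if xy: "x \<in> closure S" "y \<in> closure S" for x y
  proof -
    obtain f where f: "\<forall>n. f n \<in> S" "f \<longlonglongrightarrow> x" using closure_sequential[THEN iffD1, OF xy(1)] by blast
    obtain g where g: "\<forall>n. g n \<in> S" "g \<longlonglongrightarrow> y" using closure_sequential[THEN iffD1, OF xy(2)] by blast
    have "(\<lambda>n. f n + g n) \<longlonglongrightarrow> x + y" using f(2) g(2) by (rule tendsto_add)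
    moreover have "\<forall>n. f n + g n \<in> S" using f(1) g(1) subspace_add[OF assms] by simp
    ultimately have "\<exists>h. (\<forall>n. h n \<in> S) \<and> h \<longlonglongrightarrow> x + y"
      by (intro exI[of _ "\<lambda>n. f n + g n"] conjI)
    then show ?thesis by (simp only: closure_sequential)
  qed
  moreover have "c *\<^sub>R x \<in> closure S" if xy: "x \<in> closure S" for x c
  proof -
    obtain f where f: "\<forall>n. f n \<in> S" "f \<longlonglongrightarrow> x" using closure_sequential[THEN iffD1, OF xy(1)] by blast
    have "(\<lambda>n. c *\<^sub>R f n) \<longlonglongrightarrow> c *\<^sub>R x" using tendsto_const f(2) by (rule tendsto_scaleR)
    moreover have "\<forall>n. c *\<^sub>R f n \<in> S" using f(1) subspace_scale[OF assms] by simp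
    ultimately have "\<exists>h. (\<forall>n. h n \<in> S) \<and> h \<longlonglongrightarrow> c *\<^sub>R x"
      by (intro exI[of _ "\<lambda>n. c *\<^sub>R f n"] conjI)
    then show ?thesis by (simp only: closure_sequential)
  qed
  ultimately show ?thesis unfolding subspace_def by blast
qed

lemma inv_props:
  assumes "invertible_op J S"
  shows "inv S \<in> Bops J" "\<And>y. S (inv S y) = y" "\<And>x. inv S (S x) = x" "S \<in> Bops J"
proof -
  obtain S' where S': "S' \<in> Bops J" "S \<circ> S' = id" "S' \<circ> S = id"
    using assms unfolding invertible_op_def by blast
  have "inv S = S'" using S' inv_unique_comp by blast
  show "inv S \<in> Bops J" "\<And>y. S (inv S y) = y" "\<And>x. inv S (S x) = x"
  proof -
    have e1: "\<And>y. S (S' y) = y" using S'(2) by (metis comp_apply id_apply)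
    have e2: "\<And>x. S' (S x) = x" using S'(3) by (metis comp_apply id_apply)
    show "inv S \<in> Bops J" "\<And>y. S (inv S y) = y" "\<And>x. inv S (S x) = x"
      using S'(1) e1 e2 \<open>inv S = S'\<close> by simp_all
  qed
  show "S \<in> Bops J" using assms unfolding invertible_op_def by blast
qed

lemma cs_image:
  assumes "T \<in> Bops J" "T' \<in> Bops J" "\<And>y. T (T' y) = y" "\<And>x. T' (T x) = x"
    and "closed_csubspace J M"
  shows "closed_csubspace J (T ` M)"
proof -
  have eq: "T ` M = T' -` M"
  proof (intro set_eqI iffI)
    fix x assume "x \<in> T ` M" then show "x \<in> T' -` M" using assms(4) by auto
  next
    fix x assume "x \<in> T' -` M" then have "T (T' x) \<in> T ` M" by blast
    then show "x \<in> T ` M" using assms(3) by simp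
  qed
  have blT: "bounded_linear T" and blT': "bounded_linear T'" using assms(1,2) by (auto simp: Bops_def)
  have "closed (T' -` M)"
    using assms(5) blT' by (intro closed_vimage) (auto simp: closed_csubspace_def linear_continuous_on)
  moreover have "subspace (T ` M)"
    using assms(5) blT by (intro linear_subspace_image) (auto simp: closed_csubspace_def bounded_linear.linear)
  moreover have "J ` (T ` M) \<subseteq> T ` M"
  proof
    fix z assume "z \<in> J ` (T ` M)"
    then obtain m where m: "m \<in> M" "z = J (T m)" by auto
    have "J (T m) = T (J m)" using assms(1) by (simp add: Bops_def)
    moreover have "J m \<in> M" using m assms(5) by (auto simp: closed_csubspace_def)
    ultimately show "z \<in> T ` M" using m by auto
  qed
  ultimately show ?thesis using eq by (simp add: closed_csubspace_def)
qed

lemma Lat_iff: "M \<in> Lat J \<T> \<longleftrightarrow> closed_csubspace J M \<and> (\<forall>T\<in>\<T>. T ` M \<subseteq> M)"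
  by (simp add: Lat_def)

context
  fixes J :: "'a::banach \<Rightarrow> 'a" and \<A> :: "('a \<Rightarrow> 'a) set"
  assumes cs: "complex_structure J" and ra: "reflexive_algebra J \<A>"
begin

lemma id_in: "id \<in> \<A>"
proof -
  have "id \<in> Alg J (Lat J \<A>)"
    using cs by (auto simp: Alg_def Bops_def complex_structure_def id_def bounded_linear_ident)
  then show ?thesis using ra by (simp add: reflexive_algebra_def)
qed

lemma A_bops: "A \<in> \<A> \<Longrightarrow> A \<in> Bops J"
  using ra by (auto simp: reflexive_algebra_def subalgebra_def)

lemma orbit_Lat: "orbit_sp \<A> x \<in> Lat J \<A>"
proof -
  define O0 where "O0 = {A x | A. A \<in> \<A>}"
  have sa: "subalgebra J \<A>" using ra by (simp add: reflexive_algebra_def)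
  have sub: "subspace O0"
    unfolding subspace_def
  proof (intro conjI allI ballI)
    show "0 \<in> O0" unfolding O0_def using sa by (auto simp: subalgebra_def intro!: exI[of _ "\<lambda>x. 0"])
  next
    fix u v assume "u \<in> O0" "v \<in> O0"
    then obtain A B where "A \<in> \<A>" "B \<in> \<A>" "u = A x" "v = B x" by (auto simp: O0_def)
    then show "u + v \<in> O0" unfolding O0_def using sa
      by (auto simp: subalgebra_def intro!: exI[of _ "\<lambda>x. A x + B x"])
  next
    fix c :: real and u assume "u \<in> O0"
    then obtain A where A: "A \<in> \<A>" "u = A x" by (auto simp: O0_def)
    have "(\<lambda>y. cscale J (complex_of_real c) (A y)) \<in> \<A>" using sa A by (auto simp: subalgebra_def)
    moreover have "(\<lambda>y. cscale J (complex_of_real c) (A y)) = (\<lambda>y. c *\<^sub>R A y)"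
      by (simp add: cscale_def)
    ultimately show "c *\<^sub>R u \<in> O0" unfolding O0_def using A by force
  qed
  have JO: "J ` O0 \<subseteq> O0"
  proof
    fix z assume "z \<in> J ` O0"
    then obtain A where A: "A \<in> \<A>" "z = J (A x)" by (auto simp: O0_def)
    have "(\<lambda>y. cscale J \<i> (A y)) \<in> \<A>" using sa A by (auto simp: subalgebra_def)
    moreover have "(\<lambda>y. cscale J \<i> (A y)) = (\<lambda>y. J (A y))"
      by (simp add: cscale_def)
    ultimately show "z \<in> O0" unfolding O0_def using A by force
  qed
  have blJ: "bounded_linear J" using cs by (simp add: complex_structure_def)
  have "J ` closure O0 \<subseteq> closure O0"
    using JO blJ closure_subset
    by (intro image_closure_subset) (auto simp: linear_continuous_on)
  moreover have "B ` closure O0 \<subseteq> closure O0" if B: "B \<in> \<A>" for B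
  proof -
    have "B ` O0 \<subseteq> O0"
    proof
      fix z assume "z \<in> B ` O0"
      then obtain A where A: "A \<in> \<A>" "z = B (A x)" by (auto simp: O0_def)
      have "B \<circ> A \<in> \<A>" using sa A B by (auto simp: subalgebra_def)
      then show "z \<in> O0" unfolding O0_def using A by (auto intro!: exI[of _ "B \<circ> A"])
    qed
    moreover have "bounded_linear B" using A_bops[OF B] by (simp add: Bops_def)
    ultimately show ?thesis using closure_subset
      by (intro image_closure_subset) (auto simp: linear_continuous_on)
  qed
  ultimately show ?thesis
    using sub unfolding orbit_sp_def Lat_iff closed_csubspace_def O0_def[symmetric]
    by (simp add: subspace_closure_gen)
qed

lemma orbit_mem: "x \<in> orbit_sp \<A> x"
proof -
  have "x \<in> {A x | A. A \<in> \<A>}" using id_in by (auto intro!: exI[of _ id])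
  then show ?thesis unfolding orbit_sp_def using closure_subset by (rule subsetD[rotated])
qed

lemma orbit_min: "M \<in> Lat J \<A> \<Longrightarrow> x \<in> M \<Longrightarrow> orbit_sp \<A> x \<subseteq> M"
proof -
  assume M: "M \<in> Lat J \<A>" "x \<in> M"
  have "{A x | A. A \<in> \<A>} \<subseteq> M" using M by (auto simp: Lat_iff)
  moreover have "closed M" using M by (simp add: Lat_iff closed_csubspace_def)
  ultimately show ?thesis unfolding orbit_sp_def by (rule closure_minimal)
qed

lemma inv_from_orbits:
  assumes "closed_csubspace J M" "\<And>x. x \<in> M \<Longrightarrow> \<exists>N\<in>Lat J \<A>. x \<in> N \<and> N \<subseteq> M"
  shows "M \<in> Lat J \<A>"
  unfolding Lat_iff
proof (intro conjI ballI subsetI)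
  show "closed_csubspace J M" by fact
  fix T z assume T: "T \<in> \<A>" and "z \<in> T ` M"
  then obtain x where x: "x \<in> M" "z = T x" by auto
  obtain N where "N \<in> Lat J \<A>" "x \<in> N" "N \<subseteq> M" using assms(2) x by blast
  then show "z \<in> M" using T x by (auto simp: Lat_iff)
qed


lemma conj_in:
  assumes "T \<in> Bops J" "T' \<in> Bops J" "\<And>y. T (T' y) = y" "\<And>x. T' (T x) = x"
    and lat: "\<And>M. M \<in> Lat J \<A> \<Longrightarrow> T' ` M \<in> Lat J \<A>"
    and A: "A \<in> \<A>"
  shows "T \<circ> A \<circ> T' \<in> \<A>"
proof -
  have AB: "A \<in> Bops J" using A_bops[OF A] .
  have "T \<circ> A \<circ> T' \<in> Bops J"
  proof -
    have b1: "bounded_linear T" and b2: "bounded_linear T'" and b3: "bounded_linear A"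
      using assms(1,2) AB by (simp_all add: Bops_def)
    have "bounded_linear (\<lambda>x. T (A (T' x)))"
      using bounded_linear_compose[OF b1 bounded_linear_compose[OF b3 b2]] .
    moreover have "T (A (T' (J x))) = J (T (A (T' x)))" for x
      using assms(1,2) AB by (simp add: Bops_def)
    ultimately show ?thesis by (simp add: Bops_def o_def)
  qed
  moreover have "(T \<circ> A \<circ> T') ` M \<subseteq> M" if M: "M \<in> Lat J \<A>" for M
  proof
    fix z assume "z \<in> (T \<circ> A \<circ> T') ` M"
    then obtain m where m: "m \<in> M" "z = T (A (T' m))" by auto
    have "T' m \<in> T' ` M" using m by auto
    moreover have "A ` (T' ` M) \<subseteq> T' ` M" using lat[OF M] A by (simp add: Lat_iff)
    ultimately have "A (T' m) \<in> T' ` M" by blast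
    then obtain m' where "m' \<in> M" "A (T' m) = T' m'" by auto
    then show "z \<in> M" using m assms(3) by simp
  qed
  ultimately have "T \<circ> A \<circ> T' \<in> Alg J (Lat J \<A>)" by (simp add: Alg_def)
  then show ?thesis using ra by (simp add: reflexive_algebra_def)
qed

end

lemma bij_sub:
  assumes "\<And>y. S (S' y) = y" "\<And>x. S' (S x) = x"
  shows "S ` X \<subseteq> M \<longleftrightarrow> X \<subseteq> S' ` M"
proof
  assume "S ` X \<subseteq> M"
  show "X \<subseteq> S' ` M"
  proof
    fix x assume "x \<in> X"
    then have "S x \<in> M" using \<open>S ` X \<subseteq> M\<close> by blast
    then have "S' (S x) \<in> S' ` M" by (rule imageI)
    then show "x \<in> S' ` M" using assms(2) by simp
  qed
next
  assume "X \<subseteq> S' ` M"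
  show "S ` X \<subseteq> M"
  proof
    fix z assume "z \<in> S ` X"
    then obtain x where "x \<in> X" "z = S x" by blast
    then obtain m where "m \<in> M" "x = S' m" using \<open>X \<subseteq> S' ` M\<close> by blast
    then show "z \<in> M" using \<open>z = S x\<close> assms(1) by simp
  qed
qed

lemma bij_img:
  assumes "\<And>y. S (S' y) = y"
  shows "S ` (S' ` M) = M"
proof
  show "S ` S' ` M \<subseteq> M" using assms by (auto simp: image_comp)
  show "M \<subseteq> S ` S' ` M"
  proof
    fix m assume "m \<in> M"
    then have "S (S' m) \<in> S ` S' ` M" by (intro imageI)
    then show "m \<in> S ` S' ` M" using assms by simp
  qed
qed

theorem theorem3p9:
  fixes J :: "'a::banach \<Rightarrow> 'a" and \<A> :: "('a \<Rightarrow> 'a) set" and S :: "'a \<Rightarrow> 'a"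
  assumes "complex_structure J"
    and "reflexive_algebra J \<A>"
    and "invertible_op J S"
  shows "(S \<in> Col J \<A> \<longleftrightarrow>
            (\<forall>x. S ` orbit_sp \<A> x \<in> Lat J \<A> \<and> inv S ` orbit_sp \<A> x \<in> Lat J \<A>))
       \<and> (S \<in> Col J \<A> \<longleftrightarrow> (\<lambda>T. S \<circ> T \<circ> inv S) ` \<A> = \<A>)
       \<and> (S \<in> Col J \<A> \<longleftrightarrow> Lat J ((\<lambda>T. S \<circ> T \<circ> inv S) ` \<A>) = Lat J \<A>)
       \<and> (S \<in> Col J \<A> \<longleftrightarrow> (\<forall>x. S ` orbit_sp \<A> x = orbit_sp \<A> (S x)))"
proof -
  let ?S' = "inv S"
  have S'B: "?S' \<in> Bops J" and SS': "\<And>y. S (?S' y) = y" and S'S: "\<And>x. ?S' (S x) = x"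
    and SB: "S \<in> Bops J"
    using inv_props[OF assms(3)] by auto
  have csS: "closed_csubspace J (S ` M)" if "closed_csubspace J M" for M
    using cs_image[OF SB S'B SS' S'S that] .
  have csS': "closed_csubspace J (?S' ` M)" if "closed_csubspace J M" for M
    using cs_image[OF S'B SB S'S SS' that] .
  have imgSS': "S ` (?S' ` M) = M" for M using bij_img[of S ?S'] SS' by blast
  have imgS'S: "?S' ` (S ` M) = M" for M using bij_img[of ?S' S] S'S by blast
  have lat_cs: "M \<in> Lat J \<T> \<Longrightarrow> closed_csubspace J M" for M \<T> by (simp add: Lat_iff)
  define col where "col = (\<forall>M. closed_csubspace J M \<longrightarrow> (M \<in> Lat J \<A> \<longleftrightarrow> S ` M \<in> Lat J \<A>))"
  have colE: "S \<in> Col J \<A> \<longleftrightarrow> col"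
    using assms(3) by (simp add: Col_def collineation_def col_def)
  have colS': "col \<Longrightarrow> M \<in> Lat J \<A> \<Longrightarrow> ?S' ` M \<in> Lat J \<A>" for M
    unfolding col_def using csS'[OF lat_cs] imgSS' by metis
  have colS: "col \<Longrightarrow> M \<in> Lat J \<A> \<Longrightarrow> S ` M \<in> Lat J \<A>" for M
    unfolding col_def using lat_cs by blast
  have conjLat: "M \<in> Lat J ((\<lambda>T. S \<circ> T \<circ> ?S') ` \<A>) \<longleftrightarrow> ?S' ` M \<in> Lat J \<A>"
    if M: "closed_csubspace J M" for M
  proof -
    have "(S \<circ> A \<circ> ?S') ` M \<subseteq> M \<longleftrightarrow> A ` (?S' ` M) \<subseteq> ?S' ` M" for A
      using bij_sub[of S ?S' "A ` (?S' ` M)" M] SS' S'S by (simp add: image_comp)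
    then show ?thesis using M csS'[OF M] by (simp add: Lat_iff)
  qed
  have orbL: "orbit_sp \<A> x \<in> Lat J \<A>" for x using orbit_Lat[OF assms(1,2)] .
  have orbm: "x \<in> orbit_sp \<A> x" for x using orbit_mem[OF assms(1,2)] .
  have orbmin: "M \<in> Lat J \<A> \<Longrightarrow> x \<in> M \<Longrightarrow> orbit_sp \<A> x \<subseteq> M" for M x
    using orbit_min[OF assms(1,2)] .
  have fromorb: "closed_csubspace J M \<Longrightarrow> (\<And>x. x \<in> M \<Longrightarrow> \<exists>N\<in>Lat J \<A>. x \<in> N \<and> N \<subseteq> M)
     \<Longrightarrow> M \<in> Lat J \<A>" for M
    using inv_from_orbits[OF assms(1,2)] by blast
  define b where "b = (\<forall>x. S ` orbit_sp \<A> x \<in> Lat J \<A> \<and> ?S' ` orbit_sp \<A> x \<in> Lat J \<A>)"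
  define c where "c = ((\<lambda>T. S \<circ> T \<circ> ?S') ` \<A> = \<A>)"
  define d where "d = (Lat J ((\<lambda>T. S \<circ> T \<circ> ?S') ` \<A>) = Lat J \<A>)"
  define e where "e = (\<forall>x. S ` orbit_sp \<A> x = orbit_sp \<A> (S x))"
  have ab: "col \<Longrightarrow> b" unfolding b_def using colS colS' orbL by blast
  have ba: "col" if b unfolding col_def
  proof (intro allI impI iffI)
    fix M assume M: "closed_csubspace J M" "M \<in> Lat J \<A>"
    show "S ` M \<in> Lat J \<A>"
    proof (rule fromorb[OF csS[OF M(1)]])
      fix y assume "y \<in> S ` M"
      then obtain m where m: "m \<in> M" "y = S m" by auto
      have 1: "S ` orbit_sp \<A> m \<subseteq> S ` M" using orbmin[OF M(2) m(1)] by (rule image_mono)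
      have 2: "S ` orbit_sp \<A> m \<in> Lat J \<A>" using that unfolding b_def by simp
      have 3: "y \<in> S ` orbit_sp \<A> m" using m(2) orbm[of m] by simp
      show "\<exists>N\<in>Lat J \<A>. y \<in> N \<and> N \<subseteq> S ` M"
        using 1 2 3 by (intro bexI[of _ "S ` orbit_sp \<A> m"] conjI)
    qed
  next
    fix M assume M: "closed_csubspace J M" "S ` M \<in> Lat J \<A>"
    show "M \<in> Lat J \<A>"
    proof (rule fromorb[OF M(1)])
      fix x assume x: "x \<in> M"
      have "?S' ` orbit_sp \<A> (S x) \<subseteq> ?S' ` (S ` M)" using orbmin[OF M(2)] x by blast
      moreover have "x \<in> ?S' ` orbit_sp \<A> (S x)" using orbm[of "S x"] S'S by (metis image_eqI)
      moreover have "?S' ` orbit_sp \<A> (S x) \<in> Lat J \<A>" using that unfolding b_def by simp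
      ultimately show "\<exists>N\<in>Lat J \<A>. x \<in> N \<and> N \<subseteq> M"
        using imgS'S[of M] by (intro bexI[of _ "?S' ` orbit_sp \<A> (S x)"] conjI) simp_all
    qed
  qed
  have ac: "c" if col unfolding c_def
  proof
    show "(\<lambda>T. S \<circ> T \<circ> ?S') ` \<A> \<subseteq> \<A>"
      using conj_in[OF assms(1,2) SB S'B SS' S'S colS'[OF that]] by blast
  next
    show "\<A> \<subseteq> (\<lambda>T. S \<circ> T \<circ> ?S') ` \<A>"
    proof
      fix A assume A: "A \<in> \<A>"
      have "?S' \<circ> A \<circ> S \<in> \<A>"
        using conj_in[OF assms(1,2) S'B SB S'S SS' colS[OF that] A] .
      moreover have "A = S \<circ> (?S' \<circ> A \<circ> S) \<circ> ?S'" by (simp add: fun_eq_iff SS')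
      ultimately show "A \<in> (\<lambda>T. S \<circ> T \<circ> ?S') ` \<A>" by blast
    qed
  qed
  have cd: "c \<Longrightarrow> d" unfolding c_def d_def by simp
  have da: "col" if d unfolding col_def
  proof (intro allI impI)
    fix M assume M: "closed_csubspace J M"
    have "S ` M \<in> Lat J \<A> \<longleftrightarrow> S ` M \<in> Lat J ((\<lambda>T. S \<circ> T \<circ> ?S') ` \<A>)"
      using that unfolding d_def by simp
    also have "\<dots> \<longleftrightarrow> M \<in> Lat J \<A>" using conjLat[OF csS[OF M]] imgS'S by simp
    finally show "M \<in> Lat J \<A> \<longleftrightarrow> S ` M \<in> Lat J \<A>" by simp
  qed
  have ae: "e" if col unfolding e_def
  proof
    fix x
    have "orbit_sp \<A> (S x) \<subseteq> S ` orbit_sp \<A> x"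
      using orbmin[OF colS[OF that orbL]] orbm by blast
    moreover have "orbit_sp \<A> x \<subseteq> ?S' ` orbit_sp \<A> (S x)"
      using orbmin[OF colS'[OF that orbL]] orbm S'S by (metis image_eqI)
    then have "S ` orbit_sp \<A> x \<subseteq> orbit_sp \<A> (S x)"
      using bij_sub[of S ?S'] SS' S'S by blast
    ultimately show "S ` orbit_sp \<A> x = orbit_sp \<A> (S x)" by blast
  qed
  have eb: "b" if e unfolding b_def
  proof
    fix x
    have 1: "S ` orbit_sp \<A> y = orbit_sp \<A> (S y)" for y using that unfolding e_def by blast
    have "?S' ` orbit_sp \<A> x = ?S' ` (S ` orbit_sp \<A> (?S' x))" using 1[of "?S' x"] SS' by simp
    also have "\<dots> = orbit_sp \<A> (?S' x)" using imgS'S by simp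
    finally show "S ` orbit_sp \<A> x \<in> Lat J \<A> \<and> ?S' ` orbit_sp \<A> x \<in> Lat J \<A>"
      using 1 orbL by simp
  qed
  have "(col \<longleftrightarrow> b) \<and> (col \<longleftrightarrow> c) \<and> (col \<longleftrightarrow> d) \<and> (col \<longleftrightarrow> e)"
    using ab ba ac cd da ae eb by blast
  then show ?thesis unfolding colE b_def c_def d_def e_def .
qed

end
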